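(* Let $s>2$ be a rational number that is not an integer, let $t>1$ be an integer with $p=st$ an integer, and write $q=\lceil s\rceil$. Let $\xi_1,\dots,\xi_q$ be positive integers with $\xi_{q-1}\binom{p-t}{(q-2)t+1}=\xi_q$, $\binom{p-t}{(r-1)t+1}\xi_r=\binom{p-t}{rt}\xi_{r+1}$ for $2\le r\le q-2$, and $(p-t)\xi_1=t\binom{p-t}{t}\xi_2$. Let $\mathcal{C}$ be the array code (over a finite field $\mathbb{F}$, with $t$ rows, entries in $\mathbb{F}^p$ with basis $x_1,\dots,x_p$) whose columns are: (Type $T_1$) for each $t$-subset $A\subseteq\{1,\dots,p\}$, $\xi_1$ columns with cells $x_a$, $a\in A$; (Type $T_r$, $2\le r\le q-1$) for each $(t-1)$-subset $B$ and each $((r-1)t+1)$-subset $C\subseteq\{1,\dots,p\}\setminus B$, $\xi_r$ columns with cells $x_b$ ($b\in B$) and one cell $\sum_{c\in C}x_c$; (Type $T_q$) for each $(t-1)$-subset $B$, $\xi_q$ columns with cells $x_b$ ($b\in B$) and one cell $\sum_{c\notin B}x_c$. Let $m$ be the number of columns. Then $\mathcal{C}$ is a $[t\times m,p]$ $k$-PIR array code with PIR rate $k/m=(\beta+\gamma)/(\beta+2\gamma)$, where \[ \beta=\xi_1(p-t+1)+\sum_{r=2}^{q-1}(t-1)\xi_r\binom{p-t+1}{(r-1)t+1}+(t-1)\xi_q,\qquad \gamma=(p-t+1)\Big(\sum_{r=1}^{q-2}\xi_{r+1}\binom{p-t}{rt}+\xi_q\Big). \]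
   Context: A $[t\times m,p]$ array code is a $t\times m$ array whose entries are linear combinations of a basis $x_1,\dots,x_p$ of $\mathbb{F}^p$. It has the $k$-PIR property (is a $k$-PIR array code) if for every $i$ there exist $k$ pairwise disjoint sets $S_1,\dots,S_k$ of columns such that for each $j$ the vector $x_i$ lies in the span of all entries of the columns in $S_j$. Its PIR rate is $k/m$. *)

theory Defs
  imports Complex_Main
begin

text \<open>Vectors of F^p are modelled as functions nat \<Rightarrow> 'a, coordinates 1..p
 (all other coordinates zero). The basis vector x_i is unitvec i.\<close>

type_synonym 'a vec = "nat \<Rightarrow> 'a"

definition unitvec :: "nat \<Rightarrow> ('a::zero_neq_one) vec" where
  "unitvec i = (\<lambda>j. if j = i then 1 else 0)"

definition lspan :: "('a::field) vec set \<Rightarrow> 'a vec set" where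
  "lspan S = {v. \<exists>U c. finite U \<and> U \<subseteq> S \<and> v = (\<lambda>j. \<Sum>u\<in>U. c u * u j)}"

definition is_array_code :: "nat \<Rightarrow> nat \<Rightarrow> 'i set \<Rightarrow> ('i \<Rightarrow> ('a::zero) vec list) \<Rightarrow> bool" where
  "is_array_code t p I col \<longleftrightarrow> finite I \<and>
     (\<forall>c\<in>I. length (col c) = t \<and> (\<forall>v\<in>set (col c). \<forall>j. j \<notin> {1..p} \<longrightarrow> v j = 0))"

definition is_k_PIR :: "nat \<Rightarrow> 'i set \<Rightarrow> ('i \<Rightarrow> ('a::field) vec list) \<Rightarrow> nat \<Rightarrow> bool" where
  "is_k_PIR p I col k \<longleftrightarrow>
     (\<forall>i\<in>{1..p}. \<exists>S :: nat \<Rightarrow> 'i set.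
        (\<forall>j<k. S j \<subseteq> I \<and> unitvec i \<in> lspan (\<Union>c\<in>S j. set (col c))) \<and>
        (\<forall>j<k. \<forall>j'<k. j \<noteq> j' \<longrightarrow> S j \<inter> S j' = {}))"

text \<open>Column indices of the construction: (r, B, C, j) means the j-th copy
 (j < xi r) of the column of type T_r determined by the sets B (and C).
 For type T_1 the set B plays the role of the t-subset A.\<close>

definition code_index :: "nat \<Rightarrow> nat \<Rightarrow> nat \<Rightarrow> (nat \<Rightarrow> nat) \<Rightarrow> (nat \<times> nat set \<times> nat set \<times> nat) set" where
  "code_index p t q xi =
     {(1, A, {}, j) | A j. A \<subseteq> {1..p} \<and> card A = t \<and> j < xi 1}
   \<union> {(r, B, C, j) | r B C j. 2 \<le> r \<and> r \<le> q - 1 \<and> B \<subseteq> {1..p} \<and> card B = t - 1 \<and>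
        C \<subseteq> {1..p} - B \<and> card C = (r - 1) * t + 1 \<and> j < xi r}
   \<union> {(q, B, {}, j) | B j. B \<subseteq> {1..p} \<and> card B = t - 1 \<and> j < xi q}"

definition code_col :: "nat \<Rightarrow> nat \<Rightarrow> (nat \<times> nat set \<times> nat set \<times> nat) \<Rightarrow> ('a::{zero_neq_one,comm_monoid_add}) vec list" where
  "code_col p q c = (case c of (r, B, C, j) \<Rightarrow>
     (if r = 1 then map unitvec (sorted_list_of_set B)
      else if r = q then map unitvec (sorted_list_of_set B) @ [\<lambda>i. \<Sum>b\<in>{1..p} - B. unitvec b i]
      else map unitvec (sorted_list_of_set B) @ [\<lambda>i. \<Sum>b\<in>C. unitvec b i]))"

end

theory Submission
  imports Defs
begin


lemma hall_aux:
  "\<lbrakk>finite I; card I = n; \<forall>i\<in>I. finite (A i);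
    \<forall>J\<subseteq>I. card J \<le> card (\<Union>(A ` J))\<rbrakk>
   \<Longrightarrow> \<exists>f. inj_on f I \<and> (\<forall>i\<in>I. f i \<in> A i)"
proof (induction n arbitrary: I A rule: less_induct)
  case (less n)
  note fin = less.prems(1) and cI = less.prems(2) and finA = less.prems(3) and H = less.prems(4)
  show ?case
  proof (cases "I = {}")
    case True then show ?thesis by auto
  next
    case ne: False
    show ?thesis
    proof (cases "\<exists>J. J \<noteq> {} \<and> J \<subset> I \<and> card (\<Union>(A ` J)) = card J")
      case True
      then obtain J where J: "J \<noteq> {}" "J \<subset> I" "card (\<Union>(A ` J)) = card J" by blast
      have finJ: "finite J" using J fin finite_subset by blast
      have cJ: "card J < n" using J cI fin psubset_card_mono by blast
      obtain f1 where f1: "inj_on f1 J" "\<forall>i\<in>J. f1 i \<in> A i"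
        using less.IH[OF cJ finJ refl, of A] finA H J by auto
      define X where "X = \<Union>(A ` J)"
      have finX: "finite X" unfolding X_def using finA finJ J by auto
      define A' where "A' = (\<lambda>i. A i - X)"
      have cJ2: "card (I - J) < n" using J cI fin ne
        by (metis Diff_eq_empty_iff card_Diff_subset card_gt_0_iff diff_less finJ finite_Diff psubset_imp_subset subset_empty)
      have H2: "\<forall>K\<subseteq>I - J. card K \<le> card (\<Union>(A' ` K))"
      proof (intro allI impI)
        fix K assume K: "K \<subseteq> I - J"
        have finK: "finite K" using K fin finite_subset by blast
        have eq: "\<Union>(A' ` K) = \<Union>(A ` (K \<union> J)) - X" unfolding A'_def X_def by auto
        have fU: "finite (\<Union>(A ` (K \<union> J)))" using finA K J finK finJ by auto
        have sub: "X \<subseteq> \<Union>(A ` (K \<union> J))" unfolding X_def by auto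
        have "card (\<Union>(A' ` K)) = card (\<Union>(A ` (K \<union> J))) - card X"
          using eq fU sub by (simp add: card_Diff_subset finX)
        moreover have "card (K \<union> J) \<le> card (\<Union>(A ` (K \<union> J)))"
        proof -
          have "K \<union> J \<subseteq> I" using K J by auto
          then show ?thesis using H by blast
        qed
        moreover have "card (K \<union> J) = card K + card J" using K finK finJ
          by (subst card_Un_disjoint) auto
        moreover have "card X = card J" using J X_def by simp
        ultimately show "card K \<le> card (\<Union>(A' ` K))" by linarith
      qed
      obtain f2 where f2: "inj_on f2 (I - J)" "\<forall>i\<in>I - J. f2 i \<in> A' i"
        using less.IH[OF cJ2 _ refl, of A'] fin finA H2 unfolding A'_def by auto
      define f where "f = (\<lambda>i. if i \<in> J then f1 i else f2 i)"
      have "inj_on f I"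
      proof (rule inj_onI)
        fix x y assume xy: "x \<in> I" "y \<in> I" "f x = f y"
        show "x = y"
        proof (cases "x \<in> J"; cases "y \<in> J")
          assume "x \<in> J" "y \<in> J" then show ?thesis using xy f1 unfolding f_def by (auto dest: inj_onD)
        next
          assume a: "x \<in> J" "y \<notin> J"
          then have "f x \<in> X" using f1 unfolding f_def X_def by auto
          moreover have "f y \<notin> X" using a xy(2) f2 unfolding f_def A'_def by auto
          ultimately show ?thesis using xy by simp
        next
          assume a: "x \<notin> J" "y \<in> J"
          then have "f y \<in> X" using f1 unfolding f_def X_def by auto
          moreover have "f x \<notin> X" using a xy(1) f2 unfolding f_def A'_def by auto
          ultimately show ?thesis using xy by simp
        next
          assume "x \<notin> J" "y \<notin> J" then show ?thesis using xy f2 unfolding f_def by (auto dest: inj_onD)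
        qed
      qed
      moreover have "\<forall>i\<in>I. f i \<in> A i" using f1 f2 unfolding f_def A'_def by auto
      ultimately show ?thesis by blast
    next
      case False
      then have crit: "\<And>J. J \<noteq> {} \<Longrightarrow> J \<subset> I \<Longrightarrow> card (\<Union>(A ` J)) \<noteq> card J" by blast
      obtain i0 where i0: "i0 \<in> I" using ne by blast
      have "card {i0} \<le> card (\<Union>(A ` {i0}))" using H i0 by blast
      then have "A i0 \<noteq> {}" by auto
      then obtain x where x: "x \<in> A i0" by blast
      define A' where "A' = (\<lambda>i. A i - {x})"
      have cI2: "card (I - {i0}) < n" using i0 cI fin card_gt_0_iff by (metis card_Diff1_less)
      have H2: "\<forall>K\<subseteq>I - {i0}. card K \<le> card (\<Union>(A' ` K))"
      proof (intro allI impI)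
        fix K assume K: "K \<subseteq> I - {i0}"
        show "card K \<le> card (\<Union>(A' ` K))"
        proof (cases "K = {}")
          case True then show ?thesis by simp
        next
          case False
          have finK: "finite K" using K fin finite_subset by blast
          have fU: "finite (\<Union>(A ` K))" using finA K finK by auto
          have ps: "K \<subset> I" using K i0 by auto
          have "card K \<le> card (\<Union>(A ` K))" using H ps by auto
          moreover have "card (\<Union>(A ` K)) \<noteq> card K" using crit[OF False ps] .
          moreover have "card (\<Union>(A' ` K)) \<ge> card (\<Union>(A ` K)) - 1"
          proof -
            have "\<Union>(A' ` K) = \<Union>(A ` K) - {x}" unfolding A'_def by auto
            then show ?thesis using fU by (simp add: card_Diff_singleton_if)
          qed
          ultimately show ?thesis by linarith
        qed
      qed
      obtain f2 where f2: "inj_on f2 (I - {i0})" "\<forall>i\<in>I - {i0}. f2 i \<in> A' i"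
        using less.IH[OF cI2 _ refl, of A'] fin finA H2 unfolding A'_def by auto
      define f where "f = f2(i0 := x)"
      have "inj_on f I"
      proof (rule inj_onI)
        fix a b assume ab: "a \<in> I" "b \<in> I" "f a = f b"
        show "a = b"
          using ab f2 unfolding f_def A'_def
          by (cases "a = i0"; cases "b = i0") (auto dest: inj_onD)
      qed
      moreover have "\<forall>i\<in>I. f i \<in> A i" using f2 x unfolding f_def A'_def by auto
      ultimately show ?thesis by blast
    qed
  qed
qed

lemma hall:
  assumes "finite I" "\<forall>i\<in>I. finite (A i)" "\<forall>J\<subseteq>I. card J \<le> card (\<Union>(A ` J))"
  shows "\<exists>f. inj_on f I \<and> (\<forall>i\<in>I. f i \<in> A i)"
  using hall_aux[OF assms(1) refl assms(2,3)] .



definition ksub :: "'a set \<Rightarrow> nat \<Rightarrow> 'a set set" where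
  "ksub W d = {R. R \<subseteq> W \<and> card R = d}"

lemma card_ksub: "finite W \<Longrightarrow> card (ksub W d) = card W choose d"
  unfolding ksub_def by (rule n_subsets)

lemma finite_ksub: "finite W \<Longrightarrow> finite (ksub W d)"
  unfolding ksub_def by auto

lemma kneser_perm:
  assumes fW: "finite W" and d: "2*d \<le> card W"
  shows "\<exists>\<sigma>. bij_betw \<sigma> (ksub W d) (ksub W d) \<and> (\<forall>R\<in>ksub W d. \<sigma> R \<subseteq> W - R)"
proof -
  define I where "I = ksub W d"
  define A where "A = (\<lambda>R. ksub (W - R) d)"
  define D where "D = (card W - d) choose d"
  have finI: "finite I" unfolding I_def using fW finite_ksub by auto
  have AI: "A R \<subseteq> I" for R unfolding A_def I_def ksub_def by auto
  have cardA: "card (A R) = D" if "R \<in> I" for R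
  proof -
    have R: "R \<subseteq> W" "card R = d" using that unfolding I_def ksub_def by auto
    have "card (W - R) = card W - d" using card_Diff_subset[OF finite_subset[OF R(1) fW] R(1)] R(2) by simp
    moreover have "finite (W - R)" using fW by simp
    ultimately show ?thesis unfolding A_def D_def using card_ksub[of "W - R" d] by simp
  qed
  have Dpos: "D > 0" unfolding D_def using d by simp
  have sym: "R' \<in> A R \<longleftrightarrow> R \<in> A R'" if "R \<in> I" "R' \<in> I" for R R'
    using that unfolding A_def I_def ksub_def by auto
  have H: "\<forall>J\<subseteq>I. card J \<le> card (\<Union>(A ` J))"
  proof (intro allI impI)
    fix J assume J: "J \<subseteq> I"
    define N where "N = \<Union>(A ` J)"
    have finJ: "finite J" using J finI finite_subset by blast
    have NI: "N \<subseteq> I" unfolding N_def using AI by auto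
    have finN: "finite N" using NI finI finite_subset by blast
    have finA: "finite (A R)" for R using AI finI finite_subset by blast
    have "card (SIGMA R:J. A R) = (\<Sum>R\<in>J. card (A R))"
      using finJ finA by (simp add: card_SigmaI)
    also have "\<dots> = card J * D" using cardA J by (simp add: subset_iff)
    finally have c1: "card (SIGMA R:J. A R) = card J * D" .
    have "card (SIGMA R:N. A R) = (\<Sum>R\<in>N. card (A R))"
      using finN finA by (simp add: card_SigmaI)
    also have "\<dots> = card N * D" using cardA NI by (simp add: subset_iff)
    finally have c2: "card (SIGMA R:N. A R) = card N * D" .
    have "card (SIGMA R:J. A R) \<le> card (SIGMA R:N. A R)"
    proof (rule card_inj_on_le[where f = "\<lambda>(x,y). (y,x)"])
      show "inj_on (\<lambda>(x, y). (y, x)) (SIGMA R:J. A R)" by (auto simp: inj_on_def)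
      show "(\<lambda>(x, y). (y, x)) ` (SIGMA R:J. A R) \<subseteq> (SIGMA R:N. A R)"
      proof
        fix z assume "z \<in> (\<lambda>(x, y). (y, x)) ` (SIGMA R:J. A R)"
        then obtain x y where z: "z = (y,x)" "x \<in> J" "y \<in> A x" by auto
        have "y \<in> N" unfolding N_def using z by auto
        moreover have "x \<in> A y" using sym[of x y] z J AI by auto
        ultimately show "z \<in> (SIGMA R:N. A R)" using z by auto
      qed
      show "finite (SIGMA R:N. A R)" using finN finA by auto
    qed
    then have "card J * D \<le> card N * D" using c1 c2 by simp
    then show "card J \<le> card (\<Union>(A ` J))" using Dpos N_def by simp
  qed
  have finAI: "\<forall>R\<in>I. finite (A R)" using AI finI by (meson finite_subset)
  obtain f where f: "inj_on f I" "\<forall>R\<in>I. f R \<in> A R"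
    using hall[OF finI finAI H] by blast
  have fI: "f ` I \<subseteq> I" using f AI by blast
  have cfI: "card (f ` I) = card I" using f card_image by blast
  have "f ` I = I" using card_subset_eq[OF finI fI cfI] .
  then have "bij_betw f I I" using f(1) by (simp add: bij_betw_def)
  moreover have "\<forall>R\<in>I. f R \<subseteq> W - R"
    using f unfolding A_def ksub_def by auto
  ultimately show ?thesis unfolding I_def by blast
qed



lemma lspan_base: "v \<in> S \<Longrightarrow> v \<in> lspan S"
  unfolding lspan_def
  by (rule CollectI, rule exI[of _ "{v}"], rule exI[of _ "\<lambda>_. 1"]) auto

lemma lspan_zero: "(\<lambda>j. 0) \<in> lspan S"
  unfolding lspan_def by (rule CollectI, rule exI[of _ "{}"]) auto

lemma lspan_add:
  assumes "v \<in> lspan S" "w \<in> lspan S"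
  shows "(\<lambda>j. v j + w j) \<in> lspan S"
proof -
  obtain U c where U: "finite U" "U \<subseteq> S" "v = (\<lambda>j. \<Sum>u\<in>U. c u * u j)"
    using assms(1) unfolding lspan_def by blast
  obtain V d where V: "finite V" "V \<subseteq> S" "w = (\<lambda>j. \<Sum>u\<in>V. d u * u j)"
    using assms(2) unfolding lspan_def by blast
  define e where "e = (\<lambda>u. (if u \<in> U then c u else 0) + (if u \<in> V then d u else 0))"
  have "(\<lambda>j. v j + w j) = (\<lambda>j. \<Sum>u\<in>U \<union> V. e u * u j)"
  proof
    fix j
    have fUV: "finite (U \<union> V)" using U V by auto
    have "(\<Sum>u\<in>U \<union> V. e u * u j) = (\<Sum>u\<in>U \<union> V. (if u \<in> U then c u * u j else 0))
          + (\<Sum>u\<in>U \<union> V. (if u \<in> V then d u * u j else 0))"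
      unfolding sum.distrib[symmetric] by (rule sum.cong) (auto simp: e_def distrib_right)
    also have "(\<Sum>u\<in>U \<union> V. (if u \<in> U then c u * u j else 0)) = (\<Sum>u\<in>U. c u * u j)"
      using fUV by (intro sum.mono_neutral_cong_right) auto
    also have "(\<Sum>u\<in>U \<union> V. (if u \<in> V then d u * u j else 0)) = (\<Sum>u\<in>V. d u * u j)"
      using fUV by (intro sum.mono_neutral_cong_right) auto
    finally show "v j + w j = (\<Sum>u\<in>U \<union> V. e u * u j)" using U V by simp
  qed
  then show ?thesis unfolding lspan_def using U V by blast
qed

lemma lspan_smult:
  assumes "v \<in> lspan S"
  shows "(\<lambda>j. a * v j) \<in> lspan S"
proof -
  obtain U c where U: "finite U" "U \<subseteq> S" "v = (\<lambda>j. \<Sum>u\<in>U. c u * u j)"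
    using assms(1) unfolding lspan_def by blast
  have e: "(\<lambda>j. a * v j) = (\<lambda>j. \<Sum>u\<in>U. (a * c u) * u j)"
    unfolding U(3) by (simp add: sum_distrib_left mult.assoc)
  show ?thesis unfolding lspan_def
    by (rule CollectI, rule exI[of _ U], rule exI[of _ "\<lambda>u. a * c u"]) (use U e in simp)
qed

lemma lspan_diff:
  assumes "v \<in> lspan S" "w \<in> lspan S"
  shows "(\<lambda>j. v j - w j) \<in> lspan S"
proof -
  have "(\<lambda>j. (-1) * w j) \<in> lspan S" using lspan_smult[OF assms(2)] .
  from lspan_add[OF assms(1) this] have "(\<lambda>j. v j + (-1) * w j) \<in> lspan S" .
  moreover have "(\<lambda>j. v j + (-1) * w j) = (\<lambda>j. v j - w j)" by (simp add: algebra_simps)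
  ultimately show ?thesis by simp
qed

lemma lspan_sum:
  assumes "finite A" "\<forall>a\<in>A. g a \<in> lspan S"
  shows "(\<lambda>j. \<Sum>a\<in>A. g a j) \<in> lspan S"
  using assms
proof (induction A rule: finite_induct)
  case empty then show ?case using lspan_zero by simp
next
  case (insert x F)
  then have "(\<lambda>j. g x j + (\<Sum>a\<in>F. g a j)) \<in> lspan S"
    using lspan_add[of "g x" S "\<lambda>j. \<Sum>a\<in>F. g a j"] by auto
  then show ?case using insert by simp
qed

lemma lspan_mono: "S \<subseteq> T \<Longrightarrow> lspan S \<subseteq> lspan T"
  unfolding lspan_def by blast

lemma sum_unitvec: "finite S \<Longrightarrow> (\<Sum>b\<in>S. unitvec b j) = (if j \<in> S then 1 else 0)"
  unfolding unitvec_def by (simp add: sum.delta')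

lemma block_bij:
  assumes fX: "finite X" and fY: "finite Y"
    and c: "\<And>k. card {x\<in>X. kx x = k} = card {y\<in>Y. ky y = k}"
  shows "\<exists>f. bij_betw f X Y \<and> (\<forall>x\<in>X. ky (f x) = kx x)"
proof -
  have "\<forall>k. \<exists>g. bij_betw g {x\<in>X. kx x = k} {y\<in>Y. ky y = k}"
    using c fX fY by (simp add: finite_same_card_bij)
  then obtain G where G0: "\<forall>k. bij_betw (G k) {x\<in>X. kx x = k} {y\<in>Y. ky y = k}"
    using choice[of "\<lambda>k g. bij_betw g {x\<in>X. kx x = k} {y\<in>Y. ky y = k}"] by blast
  have G: "\<And>k. bij_betw (G k) {x\<in>X. kx x = k} {y\<in>Y. ky y = k}" using G0 by blast
  define f where "f = (\<lambda>x. G (kx x) x)"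
  have img: "f x \<in> Y \<and> ky (f x) = kx x" if "x \<in> X" for x
  proof -
    have "x \<in> {x'\<in>X. kx x' = kx x}" using that by simp
    then have "G (kx x) x \<in> {y\<in>Y. ky y = kx x}" using bij_betwE[OF G[of "kx x"]] by blast
    then show ?thesis unfolding f_def by simp
  qed
  have inj: "inj_on f X"
  proof (rule inj_onI)
    fix x y assume xy: "x \<in> X" "y \<in> X" "f x = f y"
    have k: "kx x = kx y" using img[OF xy(1)] img[OF xy(2)] xy(3) by simp
    have "x \<in> {x'\<in>X. kx x' = kx x}" "y \<in> {x'\<in>X. kx x' = kx x}" using xy k by auto
    moreover have "G (kx x) x = G (kx x) y" using xy k unfolding f_def by simp
    ultimately show "x = y" using inj_onD[OF bij_betw_imp_inj_on[OF G[of "kx x"]]] by blast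
  qed
  have surj: "Y \<subseteq> f ` X"
  proof
    fix y assume y: "y \<in> Y"
    then have "y \<in> {y'\<in>Y. ky y' = ky y}" by simp
    then obtain x where x: "x \<in> {x'\<in>X. kx x' = ky y}" "G (ky y) x = y"
      using bij_betw_imp_surj_on[OF G[of "ky y"]] by (metis (no_types, lifting) imageE)
    then have "f x = y" unfolding f_def by simp
    then show "y \<in> f ` X" using x by auto
  qed
  have "bij_betw f X Y" unfolding bij_betw_def using inj img surj by blast
  then show ?thesis using img by blast
qed



locale pirsetup =
  fixes p t q :: nat and xi :: "nat \<Rightarrow> nat"
  assumes t2: "t \<ge> 2" and q3: "q \<ge> 3" and plo: "(q-1)*t < p" and phi: "p < q*t"
    and xipos: "\<forall>r\<in>{1..q}. xi r > 0"
    and eqq: "xi (q - 1) * ((p - t) choose ((q - 2) * t + 1)) = xi q"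
    and eqr: "\<forall>r. 2 \<le> r \<and> r \<le> q - 2 \<longrightarrow>
           ((p - t) choose ((r - 1) * t + 1)) * xi r = ((p - t) choose (r * t)) * xi (r + 1)"
    and eq1: "(p - t) * xi 1 = t * ((p - t) choose t) * xi 2"
begin

abbreviation "II \<equiv> code_index p t q xi"

lemma memI: "(r,B,C,j) \<in> II \<longleftrightarrow>
   ((r = 1 \<and> B \<subseteq> {1..p} \<and> card B = t \<and> C = {} \<and> j < xi 1) \<or>
    (2 \<le> r \<and> r \<le> q - 1 \<and> B \<subseteq> {1..p} \<and> card B = t - 1 \<and> C \<subseteq> {1..p} - B \<and>
        card C = (r - 1) * t + 1 \<and> j < xi r) \<or>
    (r = q \<and> B \<subseteq> {1..p} \<and> card B = t - 1 \<and> C = {} \<and> j < xi q))"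
  unfolding code_index_def by auto

lemma finite_II: "finite II"
proof -
  define M where "M = (\<Sum>r\<le>q. xi r)"
  have le: "r \<le> q \<Longrightarrow> xi r \<le> M" for r unfolding M_def
    by (rule member_le_sum) auto
  have "II \<subseteq> {..q} \<times> Pow {1..p} \<times> Pow {1..p} \<times> {..<M}"
  proof
    fix x assume x: "x \<in> II"
    obtain r B C j where xe: "x = (r,B,C,j)" by (cases x) auto
    have "r \<le> q \<and> B \<subseteq> {1..p} \<and> C \<subseteq> {1..p} \<and> j < xi r" using x q3 unfolding xe memI by auto
    then show "x \<in> {..q} \<times> Pow {1..p} \<times> Pow {1..p} \<times> {..<M}" using le[of r] xe by auto
  qed
  then show ?thesis by (rule finite_subset) auto
qed

lemma set_col:
  assumes "(r,B,C,j) \<in> II"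
  shows "set (code_col p q (r,B,C,j) :: ('a::{zero_neq_one,comm_monoid_add}) vec list) =
    (if r = 1 then unitvec ` B else if r = q then insert (\<lambda>k. \<Sum>b\<in>{1..p} - B. unitvec b k) (unitvec ` B)
     else insert (\<lambda>k. \<Sum>b\<in>C. unitvec b k) (unitvec ` B))"
proof -
  have "finite B" using assms unfolding memI by (auto intro: finite_subset)
  then show ?thesis unfolding code_col_def by auto
qed

lemma array_code: "is_array_code t p II (code_col p q :: _ \<Rightarrow> ('a::{zero_neq_one,comm_monoid_add}) vec list)"
  unfolding is_array_code_def
proof (intro conjI ballI)
  show "finite II" by (rule finite_II)
next
  fix x assume x: "x \<in> II"
  obtain r B C j where xe: "x = (r,B,C,j)" by (cases x) auto
  have fB: "finite B" using x unfolding xe memI by (auto intro: finite_subset)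
  show "length (code_col p q x :: 'a vec list) = t"
    using x t2 fB q3 unfolding xe memI code_col_def by auto
next
  fix x v assume x: "x \<in> II" and v: "v \<in> set (code_col p q x :: 'a vec list)"
  obtain r B C j where xe: "x = (r,B,C,j)" by (cases x) auto
  show "\<forall>j. j \<notin> {1..p} \<longrightarrow> v j = 0"
  proof (intro allI impI)
    fix k assume k: "k \<notin> {1..p}"
    have sB: "B \<subseteq> {1..p}" and sC: "C \<subseteq> {1..p}" using x unfolding xe memI by auto
    have u: "unitvec b k = (0::'a)" if "b \<in> {1..p}" for b using that k unfolding unitvec_def by auto
    have s1: "(\<Sum>b\<in>{1..p} - B. unitvec b k) = (0::'a)" using u by (intro sum.neutral) auto
    have s2: "(\<Sum>b\<in>C. unitvec b k) = (0::'a)" using u sC by (intro sum.neutral) auto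
    have vs: "v \<in> insert (\<lambda>k. \<Sum>b\<in>{1..p} - B. unitvec b k) (insert (\<lambda>k. \<Sum>b\<in>C. unitvec b k) (unitvec ` B))"
      using v set_col[OF x[unfolded xe], where 'a='a] unfolding xe by (auto split: if_splits)
    show "v k = 0" using vs u s1 s2 sB by auto
  qed
qed

end


context pirsetup begin

definition "cc = (q-2)*t+1"
definition "dd = p - (q-1)*t - 1"
definition "UU i = {1..p} - {i}"
definition "sig W = (SOME \<sigma>. bij_betw \<sigma> (ksub W dd) (ksub W dd) \<and> (\<forall>R\<in>ksub W dd. \<sigma> R \<subseteq> W - R))"
definition "phiB i B C = (UU i - C) - sig (UU i - C) ((UU i - C) - B)"

lemma num: "p = (t-1) + cc + dd + 1" "dd + 2 \<le> t" "cc + t \<le> p" "t + 1 \<le> cc"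
proof -
  have a: "(q-1)*t + 1 \<le> p" using plo by simp
  have b: "p + 1 \<le> q*t" using phi by simp
  have q1: "q - 1 = (q-2) + 1" using q3 by simp
  have qq: "q = (q-2) + 2" using q3 by simp
  have e1: "(q-1)*t = (q-2)*t + t" using q1 by (metis add.commute mult_Suc Suc_eq_plus1)
  have e2: "q*t = (q-2)*t + 2*t" using qq by (metis add_mult_distrib)
  show "p = (t-1) + cc + dd + 1" unfolding cc_def dd_def using a e1 t2 by simp
  show "dd + 2 \<le> t" unfolding dd_def using a b e1 e2 by simp
  show "cc + t \<le> p" unfolding cc_def using a e1 by simp
  have "1 \<le> q - 2" using q3 by simp
  then have "t \<le> (q-2)*t" by simp
  then show "t + 1 \<le> cc" unfolding cc_def by simp
qed

lemma sig:
  assumes "finite W" "card W = t - 1 + dd"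
  shows "bij_betw (sig W) (ksub W dd) (ksub W dd) \<and> (\<forall>R\<in>ksub W dd. sig W R \<subseteq> W - R)"
proof -
  have "2 * dd \<le> card W" using assms num(2) by simp
  from kneser_perm[OF assms(1) this] show ?thesis unfolding sig_def by (rule someI_ex)
qed

lemma card_UU: "i \<in> {1..p} \<Longrightarrow> card (UU i) = p - 1"
  unfolding UU_def by simp

lemma phiB:
  assumes i: "i \<in> {1..p}" and C: "C \<subseteq> UU i" "card C = cc"
  shows "bij_betw (\<lambda>B. phiB i B C) (ksub (UU i - C) (t-1)) (ksub (UU i - C) (t-1))"
    and "\<And>B. B \<in> ksub (UU i - C) (t-1) \<Longrightarrow> (UU i - C) - B \<subseteq> phiB i B C"
proof -
  define W where "W = UU i - C"
  have fW: "finite W" unfolding W_def UU_def by simp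
  have cW: "card W = t - 1 + dd" unfolding W_def using C card_UU[OF i] num(1)
    by (simp add: card_Diff_subset finite_subset UU_def)
  note S = sig[OF fW cW]
  have comp: "bij_betw (\<lambda>B. W - B) (ksub W a) (ksub W (card W - a))" if "a \<le> card W" for a
  proof (rule bij_betw_byWitness[where f' = "\<lambda>B. W - B"])
    show "\<forall>x\<in>ksub W a. W - (W - x) = x" unfolding ksub_def by auto
    show "\<forall>x\<in>ksub W (card W - a). W - (W - x) = x" unfolding ksub_def by auto
    show "(-) W ` ksub W a \<subseteq> ksub W (card W - a)" unfolding ksub_def
      using fW by (auto simp: card_Diff_subset finite_subset)
    show "(-) W ` ksub W (card W - a) \<subseteq> ksub W a" unfolding ksub_def
      using fW that by (auto simp: card_Diff_subset finite_subset)
  qed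
  have c1: "bij_betw (\<lambda>B. W - B) (ksub W (t-1)) (ksub W dd)"
    using comp[of "t-1"] cW by simp
  have c2: "bij_betw (\<lambda>B. W - B) (ksub W dd) (ksub W (t-1))"
    using comp[of dd] cW by simp
  have "bij_betw ((\<lambda>B. W - B) \<circ> sig W \<circ> (\<lambda>B. W - B)) (ksub W (t-1)) (ksub W (t-1))"
    using c1 c2 S by (meson bij_betw_trans)
  then show "bij_betw (\<lambda>B. phiB i B C) (ksub (UU i - C) (t-1)) (ksub (UU i - C) (t-1))"
    unfolding phiB_def W_def[symmetric] by (simp add: comp_def)
  fix B assume B: "B \<in> ksub (UU i - C) (t-1)"
  then have "W - B \<in> ksub W dd" using c1 unfolding W_def by (meson bij_betwE)
  then have "sig W (W - B) \<subseteq> W - (W - B)" using S by blast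
  then show "(UU i - C) - B \<subseteq> phiB i B C" unfolding phiB_def W_def[symmetric] by auto
qed

end


lemma card_bij_fiber:
  assumes "bij_betw h D E" "K \<in> E"
  shows "card {B\<in>D. h B = K} = 1"
proof -
  obtain B0 where B0: "B0 \<in> D" "h B0 = K" using assms by (metis bij_betw_iff_bijections)
  have "{B\<in>D. h B = K} = {B0}"
    using B0 bij_betw_imp_inj_on[OF assms(1)] by (auto dest: inj_onD)
  then show ?thesis by simp
qed

context pirsetup begin

definition "Ls i = {x\<in>II. i \<notin> fst (snd x) \<and> i \<notin> fst (snd (snd x)) \<and> fst x \<noteq> q}"
definition "Hs i = {x\<in>II. i \<notin> fst (snd x) \<and> (fst x = q \<or> i \<in> fst (snd (snd x)))}"
definition "Sg i = {x\<in>II. i \<in> fst (snd x)}"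
definition "kx i x = (case x of (r,B,C,j) \<Rightarrow> if r = q - 1 then (q, phiB i B C) else (r+1, C \<union> B \<union> {i}))"
definition "ky x = (case x of (r,B,C,j) \<Rightarrow> if r = q then (q, B) else (r, C))"

lemma phiB_sub: "phiB i B C \<subseteq> UU i - C" unfolding phiB_def by auto

lemma fibY_q:
  assumes i: "i \<in> {1..p}"
  shows "card {y\<in>Hs i. ky y = (q,K)} = (if K \<in> ksub (UU i) (t-1) then xi q else 0)"
proof -
  have "{y\<in>Hs i. ky y = (q,K)} = (if K \<in> ksub (UU i) (t-1) then (\<lambda>j. (q,K,{},j)) ` {..<xi q} else {})"
  proof (rule set_eqI)
    fix y :: "nat \<times> nat set \<times> nat set \<times> nat"
    obtain r B C j where y: "y = (r,B,C,j)" by (cases y) auto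
    show "y \<in> {y\<in>Hs i. ky y = (q,K)} \<longleftrightarrow> y \<in> (if K \<in> ksub (UU i) (t-1) then (\<lambda>j. (q,K,{},j)) ` {..<xi q} else {})"
      unfolding y Hs_def ky_def ksub_def UU_def using q3 i by (auto simp: memI)
  qed
  then show ?thesis by (simp add: card_image inj_on_def)
qed

lemma fibX_q:
  assumes i: "i \<in> {1..p}"
  shows "card {x\<in>Ls i. kx i x = (q,K)} = (if K \<in> ksub (UU i) (t-1) then ((p-t) choose cc) * xi (q-1) else 0)"
proof (cases "K \<in> ksub (UU i) (t-1)")
  case False
  have e: "{x\<in>Ls i. kx i x = (q,K)} = {}"
  proof (rule ccontr)
    assume "{x\<in>Ls i. kx i x = (q,K)} \<noteq> {}"
    then obtain r B C j where x: "(r,B,C,j) \<in> Ls i" "kx i (r,B,C,j) = (q,K)" by auto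
    have r: "r = q - 1" using x(2) q3 unfolding kx_def by (auto split: if_splits)
    have K: "K = phiB i B C" using x(2) r unfolding kx_def by auto
    have m: "B \<subseteq> {1..p}" "card B = t - 1" "C \<subseteq> {1..p} - B" "card C = cc" "i \<notin> B" "i \<notin> C"
      using x(1) r q3 unfolding Ls_def cc_def by (auto simp: memI algebra_simps)
    have Cs: "C \<subseteq> UU i" using m unfolding UU_def by auto
    have "B \<in> ksub (UU i - C) (t-1)" using m unfolding ksub_def UU_def by auto
    then have "K \<in> ksub (UU i - C) (t-1)" using phiB(1)[OF i Cs m(4)] K by (meson bij_betwE)
    then show False using False unfolding ksub_def by auto
  qed
  show ?thesis unfolding e using False by simp
next
  case True
  define Z where "Z = (SIGMA C: ksub (UU i - K) cc. {B\<in>ksub (UU i - C) (t-1). phiB i B C = K}) \<times> {..<xi (q-1)}"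
  define g where "g = (\<lambda>((C::nat set,B::nat set),j::nat). (q-1,B,C,j))"
  have eq: "{x\<in>Ls i. kx i x = (q,K)} = g ` Z"
  proof (rule set_eqI)
    fix x :: "nat \<times> nat set \<times> nat set \<times> nat"
    obtain r B C j where x: "x = (r,B,C,j)" by (cases x) auto
    show "x \<in> {x\<in>Ls i. kx i x = (q,K)} \<longleftrightarrow> x \<in> g ` Z"
    proof
      assume a: "x \<in> {x\<in>Ls i. kx i x = (q,K)}"
      have r: "r = q - 1" using a q3 unfolding x kx_def by (auto split: if_splits)
      have K: "K = phiB i B C" using a r unfolding x kx_def by auto
      have m: "B \<subseteq> {1..p}" "card B = t - 1" "C \<subseteq> {1..p} - B" "card C = cc" "i \<notin> B" "i \<notin> C" "j < xi (q-1)"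
        using a r q3 unfolding x Ls_def cc_def by (auto simp: memI algebra_simps)
      have "C \<in> ksub (UU i - K) cc" using m K phiB_sub[of i B C] unfolding ksub_def UU_def by auto
      moreover have "B \<in> ksub (UU i - C) (t-1)" using m unfolding ksub_def UU_def by auto
      ultimately have "((C,B),j) \<in> Z" using K m unfolding Z_def by auto
      then show "x \<in> g ` Z" unfolding x g_def r by force
    next
      assume "x \<in> g ` Z"
      then obtain C' B' j' where z: "((C',B'),j') \<in> Z" "x = (q-1,B',C',j')" unfolding g_def by auto
      then have zz: "C' \<subseteq> UU i - K" "card C' = cc" "B' \<subseteq> UU i - C'" "card B' = t-1"
        "phiB i B' C' = K" "j' < xi (q-1)"
        unfolding Z_def ksub_def by auto
      have "x \<in> II" unfolding z(2) using zz q3 unfolding UU_def cc_def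
        by (auto simp: memI algebra_simps)
      then show "x \<in> {x\<in>Ls i. kx i x = (q,K)}"
        unfolding Ls_def kx_def z(2) using zz q3 unfolding UU_def by auto
    qed
  qed
  have inj: "inj_on g Z" unfolding g_def by (auto simp: inj_on_def)
  have inner: "card {B\<in>ksub (UU i - C) (t-1). phiB i B C = K} = 1" if C: "C \<in> ksub (UU i - K) cc" for C
  proof -
    have Cs: "C \<subseteq> UU i" "card C = cc" using C unfolding ksub_def by auto
    have "K \<in> ksub (UU i - C) (t-1)" using True C unfolding ksub_def by auto
    from card_bij_fiber[OF phiB(1)[OF i Cs] this] show ?thesis .
  qed
  have fK: "finite (UU i - K)" unfolding UU_def by simp
  have cK: "card (UU i - K) = p - t"
  proof -
    have "K \<subseteq> UU i" "card K = t - 1" using True unfolding ksub_def by auto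
    then have "card (UU i - K) = (p - 1) - (t - 1)"
      using card_UU[OF i] by (simp add: card_Diff_subset finite_subset UU_def)
    then show ?thesis using t2 by simp
  qed
  have "card (SIGMA C: ksub (UU i - K) cc. {B\<in>ksub (UU i - C) (t-1). phiB i B C = K})
        = (\<Sum>C\<in>ksub (UU i - K) cc. card {B\<in>ksub (UU i - C) (t-1). phiB i B C = K})"
    by (rule card_SigmaI) (auto simp: fK finite_ksub UU_def)
  also have "\<dots> = card (ksub (UU i - K) cc)" using inner by simp
  also have "\<dots> = (p - t) choose cc" using card_ksub[OF fK] cK by simp
  finally have "card Z = ((p-t) choose cc) * xi (q-1)" unfolding Z_def by (simp add: card_cartesian_product)
  then show ?thesis using True eq inj card_image by (metis (no_types, lifting))
qed

end


context pirsetup begin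

lemma fibY_mid:
  assumes i: "i \<in> {1..p}" and l: "l \<noteq> q"
  shows "card {y\<in>Hs i. ky y = (l,K)} = (if 2 \<le> l \<and> l \<le> q - 1 \<and> K \<subseteq> {1..p} \<and> i \<in> K \<and> card K = (l-1)*t+1
      then ((p - card K) choose (t-1)) * xi l else 0)"
proof -
  define V where "V = (2 \<le> l \<and> l \<le> q - 1 \<and> K \<subseteq> {1..p} \<and> i \<in> K \<and> card K = (l-1)*t+1)"
  define g where "g = (\<lambda>(B::nat set,j::nat). (l,B,K,j))"
  have eq: "{y\<in>Hs i. ky y = (l,K)} = (if V then g ` (ksub ({1..p} - K) (t-1) \<times> {..<xi l}) else {})"
  proof (rule set_eqI)
    fix y :: "nat \<times> nat set \<times> nat set \<times> nat"
    obtain r B C j where y: "y = (r,B,C,j)" by (cases y) auto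
    show "y \<in> {y\<in>Hs i. ky y = (l,K)} \<longleftrightarrow> y \<in> (if V then g ` (ksub ({1..p} - K) (t-1) \<times> {..<xi l}) else {})"
      unfolding y Hs_def ky_def ksub_def V_def g_def using q3 i l by (auto simp: memI)
  qed
  have inj: "inj_on g X" for X unfolding g_def by (auto simp: inj_on_def)
  show ?thesis
  proof (cases V)
    case True
    have Ks: "K \<subseteq> {1..p}" using True unfolding V_def by simp
    have "card ({1..p} - K) = p - card K" using card_Diff_subset[OF finite_subset[OF Ks] Ks] by simp
    then have "card (ksub ({1..p} - K) (t-1)) = (p - card K) choose (t-1)" by (simp add: card_ksub)
    then have "card {y\<in>Hs i. ky y = (l,K)} = ((p - card K) choose (t-1)) * xi l" unfolding eq using True inj
      by (simp add: card_image card_cartesian_product)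
    then show ?thesis using True[unfolded V_def] by simp
  next
    case False
    have nc: "\<not>(2 \<le> l \<and> l \<le> q - 1 \<and> K \<subseteq> {1..p} \<and> i \<in> K \<and> card K = (l-1)*t+1)" using False V_def by simp
    show ?thesis unfolding eq by (subst if_not_P[OF nc]) (simp add: False)
  qed
qed

lemma fibX_2:
  assumes i: "i \<in> {1..p}"
  shows "card {x\<in>Ls i. kx i x = (2,K)} = (if K \<subseteq> {1..p} \<and> i \<in> K \<and> card K = t+1 then xi 1 else 0)"
proof -
  define V where "V = (K \<subseteq> {1..p} \<and> i \<in> K \<and> card K = t+1)"
  define g where "g = (\<lambda>j::nat. (1::nat, K - {i}, {}::nat set, j))"
  have eq: "{x\<in>Ls i. kx i x = (2,K)} = (if V then g ` {..<xi 1} else {})"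
  proof (rule set_eqI)
    fix x :: "nat \<times> nat set \<times> nat set \<times> nat"
    obtain r B C j where x: "x = (r,B,C,j)" by (cases x) auto
    show "x \<in> {x\<in>Ls i. kx i x = (2,K)} \<longleftrightarrow> x \<in> (if V then g ` {..<xi 1} else {})"
    proof
      assume a: "x \<in> {x\<in>Ls i. kx i x = (2,K)}"
      have r: "r = 1" "K = C \<union> B \<union> {i}" using a q3 unfolding x kx_def by (auto split: if_splits)
      have m: "B \<subseteq> {1..p}" "card B = t" "C = {}" "j < xi 1" "i \<notin> B"
        using a r q3 unfolding x Ls_def by (auto simp: memI)
      have fB: "finite B" using m(1) finite_subset by blast
      have V using m r i fB unfolding V_def by auto
      moreover have "B = K - {i}" using m r by auto
      ultimately show "x \<in> (if V then g ` {..<xi 1} else {})" unfolding x g_def using m r by auto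
    next
      assume a: "x \<in> (if V then g ` {..<xi 1} else {})"
      then have V: V and xx: "r = 1" "B = K - {i}" "C = {}" "j < xi 1" unfolding x g_def by (auto split: if_splits)
      have fK: "finite K" using V unfolding V_def by (meson finite_atLeastAtMost finite_subset)
      have "card B = t" using V xx fK unfolding V_def by simp
      then have "x \<in> II" using V xx unfolding x V_def by (auto simp: memI)
      then show "x \<in> {x\<in>Ls i. kx i x = (2,K)}"
        using V xx q3 unfolding x Ls_def kx_def V_def by auto
    qed
  qed
  show ?thesis unfolding eq V_def[symmetric] by (simp add: card_image inj_on_def g_def)
qed

lemma fibX_mid:
  assumes i: "i \<in> {1..p}" and l: "l \<noteq> q" "3 \<le> l"
  shows "card {x\<in>Ls i. kx i x = (l,K)} = (if l \<le> q - 1 \<and> K \<subseteq> {1..p} \<and> i \<in> K \<and> card K = (l-1)*t+1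
     then (((l-1)*t) choose (t-1)) * xi (l-1) else 0)"
proof -
  define V where "V = (l \<le> q - 1 \<and> K \<subseteq> {1..p} \<and> i \<in> K \<and> card K = (l-1)*t+1)"
  define g where "g = (\<lambda>(B::nat set, j::nat). (l-1, B, K - {i} - B, j))"
  have ar: "(l-1)*t + 1 - 1 - (t-1) = (l-1-1)*t + 1"
  proof -
    have "l - 1 = (l-1-1) + 1" using l by simp
    then have "(l-1)*t = (l-1-1)*t + t" by (metis add.commute mult_Suc Suc_eq_plus1)
    then show ?thesis using t2 by simp
  qed
  have eq: "{x\<in>Ls i. kx i x = (l,K)} = (if V then g ` (ksub (K - {i}) (t-1) \<times> {..<xi (l-1)}) else {})"
  proof (rule set_eqI)
    fix x :: "nat \<times> nat set \<times> nat set \<times> nat"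
    obtain r B C j where x: "x = (r,B,C,j)" by (cases x) auto
    show "x \<in> {x\<in>Ls i. kx i x = (l,K)} \<longleftrightarrow> x \<in> (if V then g ` (ksub (K - {i}) (t-1) \<times> {..<xi (l-1)}) else {})"
    proof
      assume a: "x \<in> {x\<in>Ls i. kx i x = (l,K)}"
      have r: "r = l - 1" "K = C \<union> B \<union> {i}" "r \<noteq> q - 1" using a q3 l unfolding x kx_def by (auto split: if_splits)
      have m: "B \<subseteq> {1..p}" "card B = t - 1" "C \<subseteq> {1..p} - B" "card C = (r-1)*t+1" "j < xi r" "i \<notin> B" "i \<notin> C"
        "r \<le> q - 1"
        using a r l q3 unfolding x Ls_def by (auto simp: memI)
      have fB: "finite B" "finite C" using m(1) m(3) by (meson finite_Diff finite_atLeastAtMost finite_subset)+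
      have CB: "C \<inter> B = {}" using m(3) by auto
      have "card (C \<union> B) = card C + card B" using card_Un_disjoint[OF fB(2) fB(1) CB] .
      moreover have "i \<notin> C \<union> B" using m by auto
      ultimately have cK: "card K = card C + card B + 1" using r(2) fB by simp
      have "(r-1)*t+1 + (t-1) + 1 = (l-1)*t+1"
      proof -
        have "r = (r-1) + 1" using r l by simp
        then have "r*t = (r-1)*t + t" by (metis add.commute mult_Suc Suc_eq_plus1)
        then show ?thesis using r(1) t2 by simp
      qed
      moreover have "l \<le> q - 1" using r(1) r(3) m(8) l by arith
      ultimately have V using m r i fB cK l unfolding V_def by auto
      moreover have "B \<in> ksub (K - {i}) (t-1)" using m r unfolding ksub_def by auto
      moreover have "C = K - {i} - B" using m r by auto
      ultimately show "x \<in> (if V then g ` (ksub (K - {i}) (t-1) \<times> {..<xi (l-1)}) else {})"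
        unfolding x g_def using m r by force
    next
      assume a: "x \<in> (if V then g ` (ksub (K - {i}) (t-1) \<times> {..<xi (l-1)}) else {})"
      then have V: V and xx: "r = l - 1" "B \<subseteq> K - {i}" "card B = t - 1" "C = K - {i} - B" "j < xi (l-1)"
        unfolding x g_def ksub_def by (auto split: if_splits)
      have fK: "finite K" using V unfolding V_def by (meson finite_atLeastAtMost finite_subset)
      have "card C = card K - 1 - (t-1)" using xx fK i V unfolding V_def
        by (simp add: card_Diff_subset finite_subset)
      then have cC: "card C = (r-1)*t+1" using V ar xx(1) unfolding V_def by simp
      have "x \<in> II" using V xx cC l unfolding x V_def by (auto simp: memI)
      then show "x \<in> {x\<in>Ls i. kx i x = (l,K)}"
        using V xx q3 l unfolding x Ls_def kx_def V_def by auto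
    qed
  qed
  have inj: "inj_on g X" for X unfolding g_def by (auto simp: inj_on_def)
  show ?thesis
  proof (cases V)
    case True
    have fK: "finite K" using True unfolding V_def by (meson finite_atLeastAtMost finite_subset)
    have "card (K - {i}) = (l-1)*t" using True fK unfolding V_def by simp
    then have "card (ksub (K - {i}) (t-1)) = ((l-1)*t) choose (t-1)"
      using fK by (simp add: card_ksub)
    then have "card {x\<in>Ls i. kx i x = (l,K)} = (((l-1)*t) choose (t-1)) * xi (l-1)" unfolding eq using True inj
      by (simp add: card_image card_cartesian_product)
    then show ?thesis using True[unfolded V_def] by simp
  next
    case False
    have nc: "\<not>(l \<le> q - 1 \<and> K \<subseteq> {1..p} \<and> i \<in> K \<and> card K = (l-1)*t+1)" using False V_def by simp
    show ?thesis unfolding eq by (subst if_not_P[OF nc]) (simp add: False)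
  qed
qed

lemma fibX_low:
  assumes "l \<le> 1"
  shows "{x\<in>Ls i. kx i x = (l,K)} = {}"
  using assms q3 unfolding Ls_def kx_def by (auto simp: memI split: if_splits)

end


context pirsetup begin

lemma eq2: "xi 1 = ((p - (t+1)) choose (t-1)) * xi 2"
proof -
  have "t * ((p-t) choose t) = (p-t) * ((p-t-1) choose (t-1))"
    using t2 by (simp add: times_binomial_minus1_eq)
  then have "(p-t) * xi 1 = (p-t) * (((p-t-1) choose (t-1)) * xi 2)" using eq1 by (simp add: mult.assoc)
  moreover have "p - t > 0" using num by simp
  ultimately show ?thesis by simp
qed

lemma mid_eq:
  assumes r: "2 \<le> r" "r \<le> q - 2"
  shows "((r*t) choose (t-1)) * xi r = ((p - (r*t+1)) choose (t-1)) * xi (r+1)"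
proof -
  define a where "a = (r-1)*t+1"
  define m where "m = r*t"
  define n where "n = p - t"
  have rr: "r = (r-1) + 1" using r by simp
  have mt: "m = (r-1)*t + t" unfolding m_def using rr by (metis add.commute mult_Suc Suc_eq_plus1)
  have am: "a \<le> m" "m - a = t - 1" unfolding a_def using mt t2 by auto
  have "r + 1 \<le> q - 1" using r q3 by simp
  then have "(r+1)*t \<le> (q-1)*t" by (rule mult_le_mono1)
  then have "(r+1)*t < p" using plo by simp
  then have mn: "m \<le> n" unfolding m_def n_def by (simp add: algebra_simps)
  have na: "n - a = p - (r*t+1)" unfolding n_def a_def using mt m_def by simp
  have cm: "(n choose m) * (m choose a) = (n choose a) * ((n - a) choose (m - a))"
    using choose_mult[OF am(1) mn] .
  have sym: "m choose a = m choose (t-1)"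
    using binomial_symmetric[OF am(1)] am(2)
    by (metis am(1) binomial_symmetric diff_diff_cancel)
  have e: "(n choose a) * xi r = (n choose m) * xi (r+1)"
    using eqr r unfolding n_def a_def m_def by auto
  have "(n choose m) * ((m choose (t-1)) * xi r) = (n choose a) * ((n - a) choose (t-1)) * xi r"
    using cm sym am(2) by (simp add: mult.assoc)
  also have "\<dots> = ((n - a) choose (t-1)) * ((n choose a) * xi r)" by simp
  also have "\<dots> = (n choose m) * (((n - a) choose (t-1)) * xi (r+1))" using e by simp
  finally have "(n choose m) * ((m choose (t-1)) * xi r) = (n choose m) * (((n - a) choose (t-1)) * xi (r+1))" .
  moreover have "n choose m > 0" using mn by simp
  ultimately show ?thesis using na unfolding m_def by simp
qed

lemma fib_eq:
  assumes i: "i \<in> {1..p}"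
  shows "card {x\<in>Ls i. kx i x = \<kappa>} = card {y\<in>Hs i. ky y = \<kappa>}"
proof -
  obtain l K where k: "\<kappa> = (l,K)" by (cases \<kappa>) auto
  show ?thesis
  proof (cases "l = q")
    case True
    show ?thesis unfolding k True fibX_q[OF i] fibY_q[OF i] using eqq unfolding cc_def by (simp add: mult.commute)
  next
    case lq: False
    show ?thesis
    proof (cases "l \<le> 1")
      case True
      then show ?thesis unfolding k fibX_low[OF True] fibY_mid[OF i lq] by simp
    next
      case False
      show ?thesis
      proof (cases "l = 2")
        case True
        have lq2: "2 \<noteq> q" using lq True by simp
        show ?thesis unfolding k True fibX_2[OF i] fibY_mid[OF i lq2] using q3 eq2 by auto
      next
        case False
        then have l3: "3 \<le> l" using \<open>\<not> l \<le> 1\<close> by simp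
        show ?thesis
        proof (cases "l \<le> q - 1")
          case True
          have "((l-1)*t choose (t-1)) * xi (l-1) = ((p - ((l-1)*t+1)) choose (t-1)) * xi (l-1+1)"
            using mid_eq[of "l-1"] l3 True lq by simp
          then show ?thesis unfolding k fibX_mid[OF i lq l3] fibY_mid[OF i lq] using l3 True by auto
        next
          case False
          then show ?thesis unfolding k fibX_mid[OF i lq l3] fibY_mid[OF i lq] by auto
        qed
      qed
    qed
  qed
qed

end


context pirsetup begin

lemma pairing:
  assumes i: "i \<in> {1..p}"
  shows "\<exists>f. bij_betw f (Ls i) (Hs i) \<and> (\<forall>x\<in>Ls i. ky (f x) = kx i x)"
proof (rule block_bij)
  show "finite (Ls i)" unfolding Ls_def using finite_II by simp
  show "finite (Hs i)" unfolding Hs_def using finite_II by simp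
  show "\<And>k. card {x \<in> Ls i. kx i x = k} = card {y \<in> Hs i. ky y = k}" using fib_eq[OF i] .
qed

lemma span_pair:
  assumes i: "i \<in> {1..p}" and x: "x \<in> Ls i" and y: "y \<in> Hs i" and k: "ky y = kx i x"
  shows "(unitvec i :: ('a::field) vec) \<in> lspan (set (code_col p q x) \<union> set (code_col p q y))"
proof -
  obtain r B C j where xe: "x = (r,B,C,j)" by (cases x) auto
  obtain r' B' C' j' where ye: "y = (r',B',C',j')" by (cases y) auto
  define S where "S = (set (code_col p q x) \<union> set (code_col p q y) :: 'a vec set)"
  have xI: "(r,B,C,j) \<in> II" and yI: "(r',B',C',j') \<in> II" using x y unfolding xe ye Ls_def Hs_def by auto
  have xi': "i \<notin> B" "i \<notin> C" "r \<noteq> q" using x unfolding xe Ls_def by auto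
  have yi': "i \<notin> B'" using y unfolding ye Hs_def by auto
  have sx: "set (code_col p q x) = (if r = 1 then unitvec ` B else if r = q then insert (\<lambda>k. \<Sum>b\<in>{1..p} - B. unitvec b k) (unitvec ` B)
     else insert (\<lambda>k. \<Sum>b\<in>C. unitvec b k) (unitvec ` B))" unfolding xe by (rule set_col[OF xI])
  have sy: "set (code_col p q y) = (if r' = 1 then unitvec ` B' else if r' = q then insert (\<lambda>k. \<Sum>b\<in>{1..p} - B'. unitvec b k) (unitvec ` B')
     else insert (\<lambda>k. \<Sum>b\<in>C'. unitvec b k) (unitvec ` B'))" unfolding ye by (rule set_col[OF yI])
  have mx: "B \<subseteq> {1..p}" "C \<subseteq> {1..p} - B" "r = 1 \<Longrightarrow> C = {}" "r \<ge> 1" "r \<le> q"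
    using xI q3 unfolding memI by auto
  have my: "B' \<subseteq> {1..p}" "C' \<subseteq> {1..p} - B'" "r' \<ge> 1" "r' \<le> q"
    using yI q3 unfolding memI by auto
  have fin: "finite B" "finite C" "finite B'" "finite C'" using mx my
    by (meson finite_Diff finite_atLeastAtMost finite_subset)+
  have uB: "\<forall>b\<in>B. (unitvec b :: 'a vec) \<in> lspan S" unfolding S_def sx
    by (auto intro: lspan_base)
  have uB': "\<forall>b\<in>B'. (unitvec b :: 'a vec) \<in> lspan S" unfolding S_def sy
    by (auto intro: lspan_base)
  have sB: "(\<lambda>k. \<Sum>b\<in>B. (unitvec b k :: 'a)) \<in> lspan S" using lspan_sum[OF fin(1) uB] .
  have sC: "(\<lambda>k. \<Sum>b\<in>C. (unitvec b k :: 'a)) \<in> lspan S"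
  proof (cases "r = 1")
    case True then show ?thesis using mx(3) lspan_zero by simp
  next
    case False then show ?thesis unfolding S_def sx using xi'(3) by (auto intro: lspan_base)
  qed
  have r': "r' = (if r = q - 1 then q else r + 1)" using k unfolding xe ye kx_def ky_def by (auto split: if_splits)
  show ?thesis
  proof (cases "r = q - 1")
    case True
    then have rq: "r' = q" "B' = phiB i B C" using r' k unfolding xe ye kx_def ky_def by auto
    have Cs: "C \<subseteq> UU i" "card C = cc" using xI True q3 xi' unfolding memI UU_def cc_def
      by (auto simp: algebra_simps)
    have Bk: "B \<in> ksub (UU i - C) (t-1)" using xI True q3 xi' unfolding memI UU_def ksub_def by auto
    define R where "R = (UU i - C) - B"
    have RB': "R \<subseteq> B'" unfolding R_def rq using phiB(2)[OF i Cs Bk] .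
    have B'sub: "B' \<subseteq> UU i - C" unfolding rq by (rule phiB_sub)
    have finR: "finite R" unfolding R_def UU_def by simp
    have sR: "(\<lambda>k. \<Sum>b\<in>R. (unitvec b k :: 'a)) \<in> lspan S"
      using lspan_sum[OF finR] uB' RB' by auto
    have sB'': "(\<lambda>k. \<Sum>b\<in>B'. (unitvec b k :: 'a)) \<in> lspan S" using lspan_sum[OF fin(3) uB'] .
    have sQ: "(\<lambda>k. \<Sum>b\<in>{1..p} - B'. (unitvec b k :: 'a)) \<in> lspan S"
      unfolding S_def sy using rq q3 by (auto intro: lspan_base)
    have e: "(unitvec i :: 'a vec) = (\<lambda>k. ((((\<Sum>b\<in>{1..p} - B'. unitvec b k) + (\<Sum>b\<in>B'. unitvec b k))
          - (\<Sum>b\<in>C. unitvec b k)) - (\<Sum>b\<in>B. unitvec b k)) - (\<Sum>b\<in>R. unitvec b k))"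
    proof
      fix k
      have "k \<in> B' \<Longrightarrow> k \<in> {1..p}" using B'sub unfolding UU_def by auto
      moreover have "B \<subseteq> UU i - C" using Bk unfolding ksub_def by auto
      ultimately show "(unitvec i :: 'a vec) k = ((((\<Sum>b\<in>{1..p} - B'. unitvec b k) + (\<Sum>b\<in>B'. unitvec b k))
          - (\<Sum>b\<in>C. unitvec b k)) - (\<Sum>b\<in>B. unitvec b k)) - (\<Sum>b\<in>R. unitvec b k)"
        using fin finR Cs i unfolding sum_unitvec[OF finite_Diff[OF finite_atLeastAtMost]] sum_unitvec[OF fin(1)]
          sum_unitvec[OF fin(2)] sum_unitvec[OF fin(3)] sum_unitvec[OF finR]
        unfolding unitvec_def R_def UU_def by auto
    qed
    show ?thesis unfolding e S_def[symmetric]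
      by (intro lspan_diff lspan_add sQ sB'' sC sB sR)
  next
    case False
    have nq: "r + 1 \<noteq> q" using False q3 by arith
    have rq: "r' = r + 1" "C' = C \<union> B \<union> {i}" using r' k nq False unfolding xe ye kx_def ky_def by auto
    have "r' \<noteq> q" "r' \<noteq> 1" using rq False mx(4) by auto
    then have sC': "(\<lambda>k. \<Sum>b\<in>C'. (unitvec b k :: 'a)) \<in> lspan S"
      unfolding S_def sy by (auto intro: lspan_base)
    have e: "(unitvec i :: 'a vec) = (\<lambda>k. ((\<Sum>b\<in>C'. unitvec b k) - (\<Sum>b\<in>C. unitvec b k)) - (\<Sum>b\<in>B. unitvec b k))"
    proof
      fix k
      show "(unitvec i :: 'a vec) k = ((\<Sum>b\<in>C'. unitvec b k) - (\<Sum>b\<in>C. unitvec b k)) - (\<Sum>b\<in>B. unitvec b k)"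
        using fin xi' mx(2) unfolding sum_unitvec[OF fin(1)] sum_unitvec[OF fin(2)] sum_unitvec[OF fin(4)]
        unfolding unitvec_def rq by auto
    qed
    show ?thesis unfolding e S_def[symmetric]
      by (intro lspan_diff sC' sC sB)
  qed
qed

end


lemma card_ksub_mem:
  assumes f: "finite X" and x: "x \<in> X" and k: "k \<ge> 1"
  shows "card {A\<in>ksub X k. x \<in> A} = (card X - 1) choose (k - 1)"
proof -
  have "bij_betw (\<lambda>A. A - {x}) {A\<in>ksub X k. x \<in> A} (ksub (X - {x}) (k-1))"
  proof (rule bij_betw_byWitness[where f' = "insert x"])
    show "\<forall>a\<in>{A \<in> ksub X k. x \<in> A}. insert x (a - {x}) = a" by auto
    show "\<forall>a'\<in>ksub (X - {x}) (k - 1). insert x a' - {x} = a'" unfolding ksub_def by auto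
    show "(\<lambda>A. A - {x}) ` {A \<in> ksub X k. x \<in> A} \<subseteq> ksub (X - {x}) (k - 1)"
      unfolding ksub_def using f by (auto simp: finite_subset)
    show "insert x ` ksub (X - {x}) (k - 1) \<subseteq> {A \<in> ksub X k. x \<in> A}"
    proof
      fix A assume "A \<in> insert x ` ksub (X - {x}) (k - 1)"
      then obtain A' where A': "A = insert x A'" "A' \<subseteq> X - {x}" "card A' = k - 1" unfolding ksub_def by auto
      have "finite A'" using A' f by (meson finite_Diff finite_subset)
      moreover have "x \<notin> A'" using A' by auto
      ultimately have "card A = k" using A' k by simp
      then show "A \<in> {A \<in> ksub X k. x \<in> A}" using A' x unfolding ksub_def by auto
    qed
  qed
  then have "card {A\<in>ksub X k. x \<in> A} = card (ksub (X - {x}) (k-1))" by (rule bij_betw_same_card)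
  also have "\<dots> = (card X - 1) choose (k - 1)" using f x by (simp add: card_ksub)
  finally show ?thesis .
qed

lemma card_Sigma_const:
  assumes "finite A" "\<And>a. a \<in> A \<Longrightarrow> finite (B a)" "\<And>a. a \<in> A \<Longrightarrow> card (B a) = n"
  shows "card (SIGMA a:A. B a) = card A * n"
  using assms by (simp add: card_SigmaI)

context pirsetup begin

definition "vld r B C \<longleftrightarrow>
   ((r = 1 \<and> B \<subseteq> {1..p} \<and> card B = t \<and> C = {}) \<or>
    (2 \<le> r \<and> r \<le> q - 1 \<and> B \<subseteq> {1..p} \<and> card B = t - 1 \<and> C \<subseteq> {1..p} - B \<and>
        card C = (r - 1) * t + 1) \<or>
    (r = q \<and> B \<subseteq> {1..p} \<and> card B = t - 1 \<and> C = {}))"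

lemma memI': "(r,B,C,j) \<in> II \<longleftrightarrow> vld r B C \<and> j < xi r"
  unfolding memI vld_def by auto

lemma card_fiber_r:
  "card {x\<in>II. fst x = r \<and> P (fst (snd x)) (fst (snd (snd x)))} = card {(B,C). vld r B C \<and> P B C} * xi r"
proof -
  define g where "g = (\<lambda>((B::nat set,C::nat set),j::nat). (r,B,C,j))"
  have "{x\<in>II. fst x = r \<and> P (fst (snd x)) (fst (snd (snd x)))} = g ` ({(B,C). vld r B C \<and> P B C} \<times> {..<xi r})"
  proof (rule set_eqI)
    fix x :: "nat \<times> nat set \<times> nat set \<times> nat"
    obtain r' B C j where x: "x = (r',B,C,j)" by (cases x) auto
    show "x \<in> {x\<in>II. fst x = r \<and> P (fst (snd x)) (fst (snd (snd x)))} \<longleftrightarrow> x \<in> g ` ({(B,C). vld r B C \<and> P B C} \<times> {..<xi r})"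
    proof
      assume "x \<in> {x\<in>II. fst x = r \<and> P (fst (snd x)) (fst (snd (snd x)))}"
      then have "((B,C),j) \<in> {(B,C). vld r B C \<and> P B C} \<times> {..<xi r}" "r' = r" unfolding x by (auto simp: memI')
      then show "x \<in> g ` ({(B,C). vld r B C \<and> P B C} \<times> {..<xi r})" unfolding x g_def by force
    next
      assume "x \<in> g ` ({(B,C). vld r B C \<and> P B C} \<times> {..<xi r})"
      then show "x \<in> {x\<in>II. fst x = r \<and> P (fst (snd x)) (fst (snd (snd x)))}" unfolding x g_def by (auto simp: memI')
    qed
  qed
  moreover have "inj_on g X" for X unfolding g_def by (auto simp: inj_on_def)
  moreover have "finite {(B,C). vld r B C \<and> P B C}"
  proof (rule finite_subset)
    show "{(B,C). vld r B C \<and> P B C} \<subseteq> Pow {1..p} \<times> Pow {1..p}" unfolding vld_def by auto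
  qed simp
  ultimately show ?thesis by (simp add: card_image card_cartesian_product)
qed

lemma card_split_r:
  assumes "A \<subseteq> II"
  shows "card A = (\<Sum>r\<in>{1..q}. card {x\<in>A. fst x = r})"
proof -
  have "A = (\<Union>r\<in>{1..q}. {x\<in>A. fst x = r})"
  proof
    show "A \<subseteq> (\<Union>r\<in>{1..q}. {x\<in>A. fst x = r})"
    proof
      fix x assume xA: "x \<in> A"
      obtain r B C j where x: "x = (r,B,C,j)" by (cases x) auto
      have "(r,B,C,j) \<in> II" using xA assms x by auto
      then have "r \<in> {1..q}" using q3 unfolding memI by auto
      then show "x \<in> (\<Union>r\<in>{1..q}. {x\<in>A. fst x = r})" using xA x by auto
    qed
  qed auto
  moreover have "finite A" using assms finite_II finite_subset by blast
  then have "card (\<Union>r\<in>{1..q}. {x\<in>A. fst x = r}) = (\<Sum>r\<in>{1..q}. card {x\<in>A. fst x = r})"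
    by (intro card_UN_disjoint) auto
  ultimately show ?thesis by simp
qed

end


lemma sum_split_q:
  assumes "(q::nat) \<ge> 3"
  shows "(\<Sum>r\<in>{1..q}. f r) = f 1 + (\<Sum>r=2..q-1. f r) + (f q :: nat)"
proof -
  have "{1..q} = insert 1 (insert q {2..q-1})" using assms by auto
  moreover have "1 \<notin> insert q {2..q-1}" "q \<notin> {2..q-1}" using assms by auto
  ultimately show ?thesis by simp
qed

context pirsetup begin

lemma cardP: "finite {1..p::nat}" by simp

lemma cSg1: assumes i: "i \<in> {1..p}" shows "card {x\<in>Sg i. fst x = 1} = ((p-1) choose (t-1)) * xi 1"
proof -
  have "{x\<in>Sg i. fst x = 1} = {x\<in>II. fst x = 1 \<and> (\<lambda>B C. i \<in> B) (fst (snd x)) (fst (snd (snd x)))}"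
    unfolding Sg_def by auto
  moreover have "{(B,C). vld 1 B C \<and> i \<in> B} = (\<lambda>A. (A,{})) ` {A\<in>ksub {1..p} t. i \<in> A}"
    unfolding vld_def ksub_def using q3 by auto
  moreover have "card ((\<lambda>A. (A,{}::nat set)) ` {A\<in>ksub {1..p} t. i \<in> A}) = (p-1) choose (t-1)"
    using card_ksub_mem[OF cardP i, of t] t2 by (simp add: card_image inj_on_def)
  ultimately show ?thesis using card_fiber_r[of 1 "\<lambda>B C. i \<in> B"] by simp
qed

lemma cSgq: assumes i: "i \<in> {1..p}" shows "card {x\<in>Sg i. fst x = q} = ((p-1) choose (t-2)) * xi q"
proof -
  have "{x\<in>Sg i. fst x = q} = {x\<in>II. fst x = q \<and> (\<lambda>B C. i \<in> B) (fst (snd x)) (fst (snd (snd x)))}"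
    unfolding Sg_def by auto
  moreover have "{(B,C). vld q B C \<and> i \<in> B} = (\<lambda>A. (A,{})) ` {A\<in>ksub {1..p} (t-1). i \<in> A}"
    unfolding vld_def ksub_def using q3 by auto
  moreover have "card ((\<lambda>A. (A,{}::nat set)) ` {A\<in>ksub {1..p} (t-1). i \<in> A}) = (p-1) choose (t-2)"
  proof -
    have "card {A\<in>ksub {1..p} (t-1). i \<in> A} = (p-1) choose (t-1-1)" using card_ksub_mem[OF cardP i, of "t-1"] t2 by simp
    moreover have "t - 1 - 1 = t - 2" by simp
    ultimately show ?thesis by (simp add: card_image inj_on_def)
  qed
  ultimately show ?thesis using card_fiber_r[of q "\<lambda>B C. i \<in> B"] by simp
qed

lemma card_compl: "B \<subseteq> {1..p} \<Longrightarrow> card B = t - 1 \<Longrightarrow> card ({1..p} - B) = p - t + 1"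
  using t2 num(1) by (simp add: card_Diff_subset finite_subset)

lemma cSgm: assumes i: "i \<in> {1..p}" and r: "2 \<le> r" "r \<le> q - 1"
  shows "card {x\<in>Sg i. fst x = r} = ((p-1) choose (t-2)) * ((p-t+1) choose ((r-1)*t+1)) * xi r"
proof -
  have "{x\<in>Sg i. fst x = r} = {x\<in>II. fst x = r \<and> (\<lambda>B C. i \<in> B) (fst (snd x)) (fst (snd (snd x)))}"
    unfolding Sg_def by auto
  moreover have "{(B,C). vld r B C \<and> i \<in> B} = (SIGMA B:{A\<in>ksub {1..p} (t-1). i \<in> A}. ksub ({1..p} - B) ((r-1)*t+1))"
    unfolding vld_def ksub_def using q3 r by auto
  moreover have "card (SIGMA B:{A\<in>ksub {1..p} (t-1). i \<in> A}. ksub ({1..p} - B) ((r-1)*t+1))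
     = ((p-1) choose (t-2)) * ((p-t+1) choose ((r-1)*t+1))"
  proof (rule trans[OF card_Sigma_const])
    show "finite {A \<in> ksub {1..p} (t - 1). i \<in> A}" using finite_ksub[OF cardP] by simp
    show "finite (ksub ({1..p} - a) ((r - 1) * t + 1))" for a by (simp add: finite_ksub)
    show "card (ksub ({1..p} - a) ((r - 1) * t + 1)) = (p-t+1) choose ((r-1)*t+1)"
      if "a \<in> {A \<in> ksub {1..p} (t - 1). i \<in> A}" for a
    proof -
      have c: "card ({1..p} - a) = p - t + 1" using that card_compl unfolding ksub_def by auto
      have f: "finite ({1..p} - a)" by simp
      show ?thesis by (simp only: card_ksub[OF f] c)
    qed
    have "card {A \<in> ksub {1..p} (t - 1). i \<in> A} = (p-1) choose (t-1-1)"
      using card_ksub_mem[OF cardP i, of "t-1"] t2 by simp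
    moreover have "t - 1 - 1 = t - 2" by simp
    ultimately show "card {A \<in> ksub {1..p} (t - 1). i \<in> A} * ((p-t+1) choose ((r-1)*t+1)) =
      ((p-1) choose (t-2)) * ((p-t+1) choose ((r-1)*t+1))" by (simp only:)
  qed
  ultimately show ?thesis using card_fiber_r[of r "\<lambda>B C. i \<in> B"] by simp
qed

lemma cHs1: "card {x\<in>Hs i. fst x = 1} = 0"
proof -
  have e: "{x\<in>Hs i. fst x = 1} = {}" unfolding Hs_def using q3 by (auto simp: memI)
  show ?thesis unfolding e by simp
qed

lemma cHsq: assumes i: "i \<in> {1..p}" shows "card {x\<in>Hs i. fst x = q} = ((p-1) choose (t-1)) * xi q"
proof -
  have "{x\<in>Hs i. fst x = q} = {x\<in>II. fst x = q \<and> (\<lambda>B C. i \<notin> B \<and> (q = q \<or> i \<in> C)) (fst (snd x)) (fst (snd (snd x)))}"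
    unfolding Hs_def by auto
  moreover have "{(B,C). vld q B C \<and> i \<notin> B \<and> (q = q \<or> i \<in> C)} = (\<lambda>A. (A,{})) ` ksub (UU i) (t-1)"
    unfolding vld_def ksub_def UU_def using q3 by auto
  moreover have "card ((\<lambda>A. (A,{}::nat set)) ` ksub (UU i) (t-1)) = (p-1) choose (t-1)"
    using card_ksub[of "UU i" "t-1"] card_UU[OF i] by (simp add: card_image inj_on_def UU_def)
  ultimately show ?thesis using card_fiber_r[of q "\<lambda>B C. i \<notin> B \<and> (q = q \<or> i \<in> C)"] by simp
qed

lemma cHsm: assumes i: "i \<in> {1..p}" and r: "2 \<le> r" "r \<le> q - 1"
  shows "card {x\<in>Hs i. fst x = r} = ((p-1) choose (t-1)) * ((p-t) choose ((r-1)*t)) * xi r"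
proof -
  have rq: "r \<noteq> q" using r by simp
  have "{x\<in>Hs i. fst x = r} = {x\<in>II. fst x = r \<and> (\<lambda>B C. i \<notin> B \<and> i \<in> C) (fst (snd x)) (fst (snd (snd x)))}"
    unfolding Hs_def using rq by auto
  moreover have "{(B,C). vld r B C \<and> i \<notin> B \<and> i \<in> C} = (SIGMA B:ksub (UU i) (t-1). {C\<in>ksub ({1..p} - B) ((r-1)*t+1). i \<in> C})"
    unfolding vld_def ksub_def UU_def using q3 r by auto
  moreover have "card (SIGMA B:ksub (UU i) (t-1). {C\<in>ksub ({1..p} - B) ((r-1)*t+1). i \<in> C})
     = ((p-1) choose (t-1)) * ((p-t) choose ((r-1)*t))"
  proof (rule trans[OF card_Sigma_const])
    show "finite (ksub (UU i) (t-1))" unfolding UU_def by (simp add: finite_ksub)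
    show "finite {C\<in>ksub ({1..p} - a) ((r-1)*t+1). i \<in> C}" for a by (simp add: finite_ksub)
    show "card {C\<in>ksub ({1..p} - a) ((r-1)*t+1). i \<in> C} = (p-t) choose ((r-1)*t)"
      if a: "a \<in> ksub (UU i) (t-1)" for a
    proof -
      have "a \<subseteq> {1..p}" "card a = t - 1" "i \<notin> a" using a unfolding ksub_def UU_def by auto
      then have "card ({1..p} - a) = p - t + 1" "i \<in> {1..p} - a" using card_compl i by auto
      moreover have "p - t + 1 - 1 = p - t" "(r-1)*t+1-1 = (r-1)*t" by simp_all
      ultimately show ?thesis using card_ksub_mem[of "{1..p} - a" i "(r-1)*t+1"] by (simp only: finite_Diff finite_atLeastAtMost le_add2 simp_thms)
    qed
    show "card (ksub (UU i) (t-1)) * ((p-t) choose ((r-1)*t)) = ((p-1) choose (t-1)) * ((p-t) choose ((r-1)*t))"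
      using card_ksub[of "UU i" "t-1"] card_UU[OF i] by (simp add: UU_def)
  qed
  ultimately show ?thesis using card_fiber_r[of r "\<lambda>B C. i \<notin> B \<and> i \<in> C"] by simp
qed

end


lemma binom_ratio: "(n choose Suc k) * Suc k = (n choose k) * (n - k)"
proof -
  have a: "Suc n * (n choose k) = (Suc n choose Suc k) * Suc k" by (rule Suc_times_binomial_eq)
  have b: "(Suc n - Suc k) * (Suc n choose Suc k) = Suc n * (n choose Suc k)"
    using binomial_absorb_comp[of "Suc n" "Suc k"] by simp
  have "Suc n * ((n choose Suc k) * Suc k) = Suc k * ((Suc n - Suc k) * (Suc n choose Suc k))"
    using b by (simp add: algebra_simps)
  also have "\<dots> = (n - k) * ((Suc n choose Suc k) * Suc k)" by (metis diff_Suc_Suc mult.assoc mult.commute)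
  also have "\<dots> = (n - k) * (Suc n * (n choose k))" using a by simp
  also have "\<dots> = Suc n * ((n choose k) * (n - k))" by (simp only: ac_simps)
  finally have "Suc n * ((n choose Suc k) * Suc k) = Suc n * ((n choose k) * (n - k))" .
  moreover have "Suc n \<noteq> 0" by simp
  ultimately show ?thesis using mult_left_cancel by blast
qed

context pirsetup begin

definition "K1 = (p-1) choose (t-1)"
definition "K2 = (p-1) choose (t-2)"
definition "S0 = xi 1 * K1 + (\<Sum>r=2..q-1. K2 * ((p-t+1) choose ((r-1)*t+1)) * xi r) + K2 * xi q"
definition "H0 = (\<Sum>r=2..q-1. K1 * ((p-t) choose ((r-1)*t)) * xi r) + K1 * xi q"
definition "bet = xi 1 * (p - t + 1) + (\<Sum>r=2..q-1. (t - 1) * xi r * ((p - t + 1) choose ((r - 1) * t + 1)))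
                 + (t - 1) * xi q"
definition "gam = (p - t + 1) * ((\<Sum>r=1..q-2. xi (r + 1) * ((p - t) choose (r * t))) + xi q)"

lemma KK: "K1 * (t-1) = K2 * (p-t+1)"
proof -
  have "t - 1 = Suc (t-2)" using t2 by simp
  moreover have "p - 1 - (t-2) = p - t + 1" using t2 num(1) by simp
  ultimately show ?thesis unfolding K1_def K2_def using binom_ratio[of "p-1" "t-2"] by simp
qed

lemma card_Sg: assumes i: "i \<in> {1..p}" shows "card (Sg i) = S0"
proof -
  have "card (Sg i) = (\<Sum>r\<in>{1..q}. card {x\<in>Sg i. fst x = r})"
    by (rule card_split_r) (auto simp: Sg_def)
  also have "\<dots> = card {x\<in>Sg i. fst x = 1} + (\<Sum>r=2..q-1. card {x\<in>Sg i. fst x = r}) + card {x\<in>Sg i. fst x = q}"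
    by (rule sum_split_q[OF q3])
  also have "(\<Sum>r=2..q-1. card {x\<in>Sg i. fst x = r}) = (\<Sum>r=2..q-1. K2 * ((p-t+1) choose ((r-1)*t+1)) * xi r)"
    by (rule sum.cong) (auto simp: cSgm[OF i] K2_def)
  finally show ?thesis unfolding S0_def using cSg1[OF i] cSgq[OF i] by (simp add: K1_def K2_def)
qed

lemma card_Hs: assumes i: "i \<in> {1..p}" shows "card (Hs i) = H0"
proof -
  have "card (Hs i) = (\<Sum>r\<in>{1..q}. card {x\<in>Hs i. fst x = r})"
    by (rule card_split_r) (auto simp: Hs_def)
  also have "\<dots> = card {x\<in>Hs i. fst x = 1} + (\<Sum>r=2..q-1. card {x\<in>Hs i. fst x = r}) + card {x\<in>Hs i. fst x = q}"
    by (rule sum_split_q[OF q3])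
  also have "(\<Sum>r=2..q-1. card {x\<in>Hs i. fst x = r}) = (\<Sum>r=2..q-1. K1 * ((p-t) choose ((r-1)*t)) * xi r)"
    by (rule sum.cong) (auto simp: cHsm[OF i] K1_def)
  finally show ?thesis unfolding H0_def using cHs1 cHsq[OF i] by (simp add: K1_def)
qed

lemma S0_bet: "(t-1) * S0 = K2 * bet"
proof -
  have b: "(t-1) * (\<Sum>r=2..q-1. K2 * ((p-t+1) choose ((r-1)*t+1)) * xi r)
      = K2 * (\<Sum>r=2..q-1. (t - 1) * xi r * ((p - t + 1) choose ((r - 1) * t + 1)))"
    by (simp add: sum_distrib_left ac_simps)
  have a: "(t-1) * (xi 1 * K1) = K2 * (xi 1 * (p - t + 1))"
  proof -
    have "(t-1) * (xi 1 * K1) = xi 1 * (K1 * (t-1))" by (simp add: ac_simps)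
    also have "\<dots> = xi 1 * (K2 * (p-t+1))" by (simp only: KK)
    also have "\<dots> = K2 * (xi 1 * (p - t + 1))" by (simp only: mult.commute mult.left_commute)
    finally show ?thesis .
  qed
  have c: "(t-1) * (K2 * xi q) = K2 * ((t - 1) * xi q)" by (simp add: ac_simps)
  show ?thesis unfolding S0_def bet_def by (simp only: distrib_left a b c)
qed

lemma H0_gam: "(p-t+1) * H0 = K1 * gam"
proof -
  have e1: "{2..q-1} = {1+1..(q-2)+1}" using q3 by auto
  have "(\<Sum>r=2..q-1. xi r * ((p - t) choose ((r-1) * t))) = (\<Sum>r=1+1..(q-2)+1. xi r * ((p - t) choose ((r-1) * t)))"
    unfolding e1 ..
  also have "\<dots> = (\<Sum>r=1..q-2. xi (r+1) * ((p - t) choose ((r+1-1) * t)))"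
    by (rule sum.shift_bounds_cl_nat_ivl)
  finally have sh: "(\<Sum>r=1..q-2. xi (r + 1) * ((p - t) choose (r * t))) = (\<Sum>r=2..q-1. xi r * ((p - t) choose ((r-1) * t)))"
    by simp
  have g: "gam = (p - t + 1) * ((\<Sum>r=2..q-1. xi r * ((p - t) choose ((r-1) * t))) + xi q)"
    unfolding gam_def sh ..
  have s: "(\<Sum>r=2..q-1. K1 * ((p-t) choose ((r-1)*t)) * xi r) = K1 * (\<Sum>r=2..q-1. xi r * ((p - t) choose ((r-1) * t)))"
    by (simp add: sum_distrib_left ac_simps)
  show ?thesis unfolding H0_def g s by (simp add: algebra_simps)
qed

lemma cross: "S0 * gam = H0 * bet"
proof -
  have "(t-1) * (p-t+1) * (S0 * gam) = (p-t+1) * K2 * bet * gam" using S0_bet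
    by (metis mult.assoc mult.commute)
  also have "\<dots> = (t-1) * K1 * gam * bet" using KK by (metis mult.assoc mult.commute)
  also have "\<dots> = (t-1) * (p-t+1) * (H0 * bet)" using H0_gam by (metis mult.assoc mult.commute)
  finally have "(t-1) * (p-t+1) * (S0 * gam) = (t-1) * (p-t+1) * (H0 * bet)" .
  moreover have "(t-1) * (p-t+1) \<noteq> 0" using t2 by simp
  ultimately show ?thesis using mult_left_cancel[of "(t-1) * (p-t+1)"] by blast
qed

end


context pirsetup begin

lemma subsets_II: "Sg i \<subseteq> II" "Ls i \<subseteq> II" "Hs i \<subseteq> II"
  unfolding Sg_def Ls_def Hs_def by auto

lemma disj: "Sg i \<inter> Ls i = {}" "Sg i \<inter> Hs i = {}" "Ls i \<inter> Hs i = {}"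
  unfolding Sg_def Ls_def Hs_def by auto

lemma split_II: "II = Sg i \<union> Ls i \<union> Hs i"
  unfolding Sg_def Ls_def Hs_def by auto

lemma card_Ls: assumes i: "i \<in> {1..p}" shows "card (Ls i) = H0"
proof -
  obtain f where "bij_betw f (Ls i) (Hs i)" using pairing[OF i] by blast
  then show ?thesis using card_Hs[OF i] bij_betw_same_card by metis
qed

lemma card_II: "card II = S0 + 2 * H0"
proof -
  have i: "1 \<in> {1..p}" using num(1) by simp
  have f: "finite (Sg 1)" "finite (Ls 1)" "finite (Hs 1)"
    using finite_subset[OF subsets_II(1) finite_II] finite_subset[OF subsets_II(2) finite_II]
      finite_subset[OF subsets_II(3) finite_II] by auto
  have "card II = card (Sg 1 \<union> Ls 1 \<union> Hs 1)" using split_II by metis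
  also have "\<dots> = card (Sg 1) + card (Ls 1) + card (Hs 1)"
    using f disj by (simp add: card_Un_disjoint Int_Un_distrib2)
  finally show ?thesis using card_Sg[OF i] card_Ls[OF i] card_Hs[OF i] by simp
qed

lemma unit_in_col:
  assumes "(r,B,C,j) \<in> II" "b \<in> B"
  shows "(unitvec b :: ('a::{zero_neq_one,comm_monoid_add}) vec) \<in> set (code_col p q (r,B,C,j))"
  using set_col[OF assms(1), where 'a='a] assms(2) by auto

lemma PIR: "is_k_PIR p II (code_col p q :: _ \<Rightarrow> ('a::field) vec list) (S0 + H0)"
  unfolding is_k_PIR_def
proof (intro ballI)
  fix i assume i: "i \<in> {1..p}"
  obtain f where f: "bij_betw f (Ls i) (Hs i)" "\<forall>x\<in>Ls i. ky (f x) = kx i x" using pairing[OF i] by blast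
  define D where "D = Sg i \<union> Ls i"
  have fS: "finite (Sg i)" "finite (Ls i)"
    using finite_subset[OF subsets_II(1) finite_II] finite_subset[OF subsets_II(2) finite_II] by auto
  have fD: "finite D" unfolding D_def using fS by simp
  have cD: "card D = S0 + H0" unfolding D_def
    using card_Un_disjoint[OF fS disj(1)] card_Sg[OF i] card_Ls[OF i] by simp
  obtain g where g: "bij_betw g {0..<card D} D" using ex_bij_betw_nat_finite[OF fD] by blast
  define S where "S = (\<lambda>j. if g j \<in> Sg i then {g j} else {g j, f (g j)})"
  have gD: "g j \<in> D" if "j < S0 + H0" for j using g that cD by (auto dest: bij_betwE)
  have fH: "f x \<in> Hs i" if "x \<in> Ls i" for x using f(1) that by (auto dest: bij_betwE)
  show "\<exists>S. (\<forall>j<S0 + H0. S j \<subseteq> II \<and> unitvec i \<in> lspan (\<Union>c\<in>S j. set (code_col p q c :: 'a vec list))) \<and>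
            (\<forall>j<S0 + H0. \<forall>j'<S0 + H0. j \<noteq> j' \<longrightarrow> S j \<inter> S j' = {})"
  proof (intro exI conjI allI impI)
    fix j assume j: "j < S0 + H0"
    have g1: "g j \<in> II" using gD[OF j] subsets_II(1)[of i] subsets_II(2)[of i] unfolding D_def by blast
    have g2: "f (g j) \<in> II" if "g j \<notin> Sg i"
    proof -
      have "g j \<in> Ls i" using gD[OF j] that unfolding D_def by blast
      then show ?thesis using fH subsets_II(3)[of i] by blast
    qed
    show "S j \<subseteq> II" unfolding S_def using g1 g2 by auto
    show "unitvec i \<in> lspan (\<Union>c\<in>S j. set (code_col p q c :: 'a vec list))"
    proof (cases "g j \<in> Sg i")
      case True
      obtain r B C jj where e: "g j = (r,B,C,jj)" by (cases "g j") auto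
      have "(r,B,C,jj) \<in> II" "i \<in> B" using True unfolding e Sg_def by auto
      then have "(unitvec i :: 'a vec) \<in> set (code_col p q (g j))" unfolding e by (rule unit_in_col)
      then show ?thesis unfolding S_def using True by (auto intro: lspan_base)
    next
      case False
      then have L: "g j \<in> Ls i" using gD[OF j] unfolding D_def by auto
      have "(unitvec i :: 'a vec) \<in> lspan (set (code_col p q (g j)) \<union> set (code_col p q (f (g j))))"
        using span_pair[OF i L fH[OF L]] f(2) L by auto
      moreover have "(\<Union>c\<in>S j. set (code_col p q c :: 'a vec list)) = set (code_col p q (g j)) \<union> set (code_col p q (f (g j)))"
        unfolding S_def using False by auto
      ultimately show ?thesis by simp
    qed
  next
    fix j j' assume j: "j < S0 + H0" and j': "j' < S0 + H0" and ne: "j \<noteq> j'"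
    have gne: "g j \<noteq> g j'" using g j j' ne cD unfolding bij_betw_def by (auto dest: inj_onD)
    have H: "x \<notin> Hs i" if "x \<in> D" for x using that disj(2)[of i] disj(3)[of i] unfolding D_def by blast
    have finj: "f a = f b \<Longrightarrow> a \<in> Ls i \<Longrightarrow> b \<in> Ls i \<Longrightarrow> a = b" for a b
      using f(1) unfolding bij_betw_def by (auto dest: inj_onD)
    have a1: "g j \<noteq> f (g j')" if "g j' \<in> Ls i" using H[OF gD[OF j]] fH[OF that] by auto
    have a2: "f (g j) \<noteq> g j'" if "g j \<in> Ls i" using H[OF gD[OF j']] fH[OF that] by auto
    have a3: "f (g j) \<noteq> f (g j')" if "g j \<in> Ls i" "g j' \<in> Ls i" using finj that gne by blast
    have L: "g j \<notin> Sg i \<Longrightarrow> g j \<in> Ls i" "g j' \<notin> Sg i \<Longrightarrow> g j' \<in> Ls i"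
      using gD[OF j] gD[OF j'] unfolding D_def by auto
    show "S j \<inter> S j' = {}"
      unfolding S_def using gne a1 a2 a3 L by auto
  qed
qed

lemma pos: "S0 > 0" "bet > 0"
proof -
  have x1: "xi 1 > 0" using xipos q3 by auto
  have "K1 > 0" unfolding K1_def using num(1) by simp
  then show "S0 > 0" unfolding S0_def using x1 by simp
  show "bet > 0" unfolding bet_def using x1 by simp
qed

lemma ratio: "real (S0 + H0) / real (card II) = real (bet + gam) / real (bet + 2 * gam)"
proof -
  have n: "(S0 + H0) * (bet + 2 * gam) = (bet + gam) * (S0 + 2 * H0)"
    using cross by (simp add: algebra_simps)
  then have r: "real (S0 + H0) * real (bet + 2 * gam) = real (bet + gam) * real (S0 + 2 * H0)"
    by (metis of_nat_mult)
  have "real (S0 + 2 * H0) > 0" "real (bet + 2 * gam) > 0" using pos by auto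
  then show ?thesis unfolding card_II using r by (simp add: field_simps)
qed

end


theorem theorem12:
  fixes s :: rat and t p q :: nat and xi :: "nat \<Rightarrow> nat"
  assumes "s > 2" and "s \<notin> \<int>" and "t > 1" and "of_nat p = s * of_nat t"
    and "q = nat \<lceil>s\<rceil>"
    and "\<forall>r\<in>{1..q}. xi r > 0"
    and "xi (q - 1) * ((p - t) choose ((q - 2) * t + 1)) = xi q"
    and "\<forall>r. 2 \<le> r \<and> r \<le> q - 2 \<longrightarrow>
           ((p - t) choose ((r - 1) * t + 1)) * xi r = ((p - t) choose (r * t)) * xi (r + 1)"
    and "(p - t) * xi 1 = t * ((p - t) choose t) * xi 2"
  shows "let I = code_index p t q xi;
             col = (code_col p q :: _ \<Rightarrow> ('a::{field,finite}) vec list);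
             m = card I;
             \<beta> = xi 1 * (p - t + 1) + (\<Sum>r=2..q-1. (t - 1) * xi r * ((p - t + 1) choose ((r - 1) * t + 1)))
                 + (t - 1) * xi q;
             \<gamma> = (p - t + 1) * ((\<Sum>r=1..q-2. xi (r + 1) * ((p - t) choose (r * t))) + xi q)
         in is_array_code t p I col \<and>
            (\<exists>k. is_k_PIR p I col k \<and> real k / real m = real (\<beta> + \<gamma>) / real (\<beta> + 2 * \<gamma>))"
proof -
  define c where "c = \<lceil>s\<rceil>"
  have c1: "of_int c - 1 < s" "s \<le> of_int c" unfolding c_def using ceiling_correct[of s] by auto
  have c2: "s \<noteq> of_int c" using assms(2) by (metis Ints_of_int)
  have c3: "s < of_int c" using c1 c2 by simp
  have "(2::rat) < of_int c" using c3 assms(1) by linarith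
  then have "(2::int) < c" by simp
  then have cge: "c \<ge> 3" by simp
  have qc: "int q = c" using assms(5) cge unfolding c_def by simp
  have qr: "(of_nat q :: rat) = of_int c" using qc by (metis of_int_of_nat_eq)
  have q3: "q \<ge> 3" using qc cge by simp
  have tpos: "(of_nat t :: rat) > 0" using assms(3) by simp
  have "(of_nat ((q-1)*t) :: rat) = (of_nat q - 1) * of_nat t" using q3 by (simp add: of_nat_diff)
  also have "\<dots> < s * of_nat t" using c1(1) qr tpos by (simp add: mult_strict_right_mono)
  finally have lo: "(q-1)*t < p" using assms(4) by (metis of_nat_less_iff)
  have "(of_nat p :: rat) < of_nat q * of_nat t" using assms(4) c3 qr tpos by (simp add: mult_strict_right_mono)
  then have hi: "p < q*t" by (metis of_nat_less_iff of_nat_mult)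
  interpret P: pirsetup p t q xi
    by unfold_locales (use assms lo hi q3 in auto)
  show ?thesis
    unfolding Let_def P.bet_def[symmetric] P.gam_def[symmetric]
  proof (intro conjI exI)
    show "is_array_code t p (code_index p t q xi) (code_col p q :: _ \<Rightarrow> 'a vec list)" by (rule P.array_code)
    show "is_k_PIR p (code_index p t q xi) (code_col p q :: _ \<Rightarrow> 'a vec list) (P.S0 + P.H0)" by (rule P.PIR)
    show "real (P.S0 + P.H0) / real (card (code_index p t q xi)) = real (P.bet + P.gam) / real (P.bet + 2 * P.gam)"
      by (rule P.ratio)
  qed
qed


end
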